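(* Let $\mathfrak{n}$ be the real $7$-dimensional Lie algebra with basis $e_1,\dots,e_7$ whose nonzero brackets (up to antisymmetry) are $[e_1,e_2]=e_4$, $[e_1,e_4]=e_5$, $[e_1,e_5]=e_7$, $[e_1,e_6]=e_7$, $[e_2,e_3]=e_6$, $[e_2,e_4]=e_6$, $[e_2,e_5]=e_7$, $[e_3,e_4]=-e_7$. Then $\mathfrak{n}$ is not an Einstein nilradical.
   Context: A real nilpotent Lie algebra $\mathfrak{n}$ is called an Einstein nilradical if it admits an inner product such that the left-invariant Riemannian metric it defines on the simply connected nilpotent Lie group with Lie algebra $\mathfrak{n}$ is a nilsoliton, i.e. its Ricci operator satisfies $\mathrm{Ric}=c\,\mathrm{Id}+D$ for some $c\in\mathbb{R}$ and some derivation $D$ of $\mathfrak{n}$. Brackets of basis elements not listed are zero. *)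

theory Defs
  imports "HOL-Analysis.Analysis"
begin

definition inner_prod :: "('a::real_vector \<Rightarrow> 'a \<Rightarrow> real) \<Rightarrow> bool" where
  "inner_prod B \<longleftrightarrow> bilinear B \<and> (\<forall>x y. B x y = B y x) \<and> (\<forall>x. x \<noteq> 0 \<longrightarrow> B x x > 0)"

(* Levi-Civita connection of the left-invariant metric, on left-invariant fields (Koszul formula) *)
definition LC_conn :: "('a::real_vector \<Rightarrow> 'a \<Rightarrow> 'a) \<Rightarrow> ('a \<Rightarrow> 'a \<Rightarrow> real) \<Rightarrow> 'a \<Rightarrow> 'a \<Rightarrow> 'a" where
  "LC_conn L B X Y =
     (THE v. \<forall>Z. B v Z = (B (L X Y) Z - B (L Y Z) X + B (L Z X) Y) / 2)"

definition curv :: "('a::real_vector \<Rightarrow> 'a \<Rightarrow> 'a) \<Rightarrow> ('a \<Rightarrow> 'a \<Rightarrow> real) \<Rightarrow> 'a \<Rightarrow> 'a \<Rightarrow> 'a \<Rightarrow> 'a" where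
  "curv L B X Y Z =
     LC_conn L B X (LC_conn L B Y Z) - LC_conn L B Y (LC_conn L B X Z) - LC_conn L B (L X Y) Z"

definition ricci_form :: "(real^'n \<Rightarrow> real^'n \<Rightarrow> real^'n) \<Rightarrow> (real^'n \<Rightarrow> real^'n \<Rightarrow> real)
    \<Rightarrow> real^'n \<Rightarrow> real^'n \<Rightarrow> real" where
  "ricci_form L B X Y = (\<Sum>i\<in>UNIV. (curv L B (axis i 1) X Y) $ i)"

definition ricci_op :: "(real^'n \<Rightarrow> real^'n \<Rightarrow> real^'n) \<Rightarrow> (real^'n \<Rightarrow> real^'n \<Rightarrow> real)
    \<Rightarrow> real^'n \<Rightarrow> real^'n" where
  "ricci_op L B X = (THE v. \<forall>Y. B v Y = ricci_form L B X Y)"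

definition derivation :: "('a::real_vector \<Rightarrow> 'a \<Rightarrow> 'a) \<Rightarrow> ('a \<Rightarrow> 'a) \<Rightarrow> bool" where
  "derivation L D \<longleftrightarrow> linear D \<and> (\<forall>x y. D (L x y) = L (D x) y + L x (D y))"

definition nilsoliton :: "(real^'n \<Rightarrow> real^'n \<Rightarrow> real^'n) \<Rightarrow> (real^'n \<Rightarrow> real^'n \<Rightarrow> real) \<Rightarrow> bool" where
  "nilsoliton L B \<longleftrightarrow> (\<exists>c D. derivation L D \<and> (\<forall>X. ricci_op L B X = c *\<^sub>R X + D X))"

definition einstein_nilradical :: "(real^'n \<Rightarrow> real^'n \<Rightarrow> real^'n) \<Rightarrow> bool" where
  "einstein_nilradical L \<longleftrightarrow> (\<exists>B. inner_prod B \<and> nilsoliton L B)"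

(* The concrete algebra on real^7; basis vector e_k is axis k 1 (k = 1..7; note 7 = 0 in type 7) *)
definition ebas :: "7 \<Rightarrow> real^7" where
  "ebas k = axis k 1"

definition br0 :: "7 \<Rightarrow> 7 \<Rightarrow> real^7" where
  "br0 i j =
    (if i = 1 \<and> j = 2 then ebas 4
     else if i = 1 \<and> j = 4 then ebas 5
     else if i = 1 \<and> j = 5 then ebas 7
     else if i = 1 \<and> j = 6 then ebas 7
     else if i = 2 \<and> j = 3 then ebas 6
     else if i = 2 \<and> j = 4 then ebas 6
     else if i = 2 \<and> j = 5 then ebas 7
     else if i = 3 \<and> j = 4 then - ebas 7
     else 0)"

definition nbr :: "real^7 \<Rightarrow> real^7 \<Rightarrow> real^7" where
  "nbr x y = (\<Sum>i\<in>UNIV. \<Sum>j\<in>UNIV. (x $ i * y $ j) *\<^sub>R (br0 i j - br0 j i))"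

end

theory Submission
  imports Defs
begin

lemma exhaust_7:
  fixes x :: 7
  shows "x = 1 \<or> x = 2 \<or> x = 3 \<or> x = 4 \<or> x = 5 \<or> x = 6 \<or> x = 7"
proof (induct x)
  case (of_int z)
  then have "z = 0 \<or> z = 1 \<or> z = 2 \<or> z = 3 \<or> z = 4 \<or> z = 5 \<or> z = 6" by fastforce
  then show ?case by auto
qed

lemma UNIV_7: "(UNIV::7 set) = {1,2,3,4,5,6,7}"
  using exhaust_7 by auto

lemma sum_7: "sum f (UNIV::7 set) = f 1 + f 2 + f 3 + f 4 + f 5 + f 6 + f 7"
  unfolding UNIV_7 by (simp add: ac_simps)

lemma forall_7: "(\<forall>i::7. P i) \<longleftrightarrow> P 1 \<and> P 2 \<and> P 3 \<and> P 4 \<and> P 5 \<and> P 6 \<and> P 7"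
  by (metis exhaust_7)

lemma nbr_c1: "nbr x y $ 1 = 0"
  unfolding nbr_def br0_def ebas_def by (simp add: sum_7 axis_def)
lemma nbr_c2: "nbr x y $ 2 = 0"
  unfolding nbr_def br0_def ebas_def by (simp add: sum_7 axis_def)
lemma nbr_c3: "nbr x y $ 3 = 0"
  unfolding nbr_def br0_def ebas_def by (simp add: sum_7 axis_def)
lemma nbr_c4: "nbr x y $ 4 = x$1 * y$2 - x$2 * y$1"
  unfolding nbr_def br0_def ebas_def by (simp add: sum_7 axis_def)
lemma nbr_c5: "nbr x y $ 5 = x$1 * y$4 - x$4 * y$1"
  unfolding nbr_def br0_def ebas_def by (simp add: sum_7 axis_def)
lemma nbr_c6: "nbr x y $ 6 = x$2 * y$3 - x$3 * y$2 + x$2 * y$4 - x$4 * y$2"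
  unfolding nbr_def br0_def ebas_def by (simp add: sum_7 axis_def algebra_simps)
lemma nbr_c7: "nbr x y $ 7 = x$1 * y$5 - x$5 * y$1 + x$1 * y$6 - x$6 * y$1 + x$2 * y$5 - x$5 * y$2
   - x$3 * y$4 + x$4 * y$3"
  unfolding nbr_def br0_def ebas_def by (simp add: sum_7 axis_def algebra_simps)

lemmas nbr_c = nbr_c1 nbr_c2 nbr_c3 nbr_c4 nbr_c5 nbr_c6 nbr_c7

lemma nbr_ladd: "nbr (x + y) z = nbr x z + nbr y z"
  by (simp add: vec_eq_iff forall_7 nbr_c algebra_simps)
lemma nbr_radd: "nbr z (x + y) = nbr z x + nbr z y"
  by (simp add: vec_eq_iff forall_7 nbr_c algebra_simps)
lemma nbr_lscale: "nbr (a *\<^sub>R x) z = a *\<^sub>R nbr x z"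
  by (simp add: vec_eq_iff forall_7 nbr_c algebra_simps)
lemma nbr_rscale: "nbr z (a *\<^sub>R x) = a *\<^sub>R nbr z x"
  by (simp add: vec_eq_iff forall_7 nbr_c algebra_simps)
lemma nbr_antisym: "nbr y x = - nbr x y"
  by (simp add: vec_eq_iff forall_7 nbr_c algebra_simps)

lemma bilinear_nbr: "bilinear nbr"
  unfolding bilinear_def
  by (auto intro!: linearI simp: nbr_ladd nbr_radd nbr_lscale nbr_rscale)

lemma nbr_lsum: "nbr (\<Sum>i\<in>S. g i) z = (\<Sum>i\<in>S. nbr (g i) z)"
proof -
  have "linear (\<lambda>x. nbr x z)" using bilinear_nbr unfolding bilinear_def by auto
  then show ?thesis by (rule linear_sum)
qed
lemma nbr_rsum: "nbr z (\<Sum>i\<in>S. g i) = (\<Sum>i\<in>S. nbr z (g i))"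
proof -
  have "linear (\<lambda>x. nbr z x)" using bilinear_nbr unfolding bilinear_def by auto
  then show ?thesis by (rule linear_sum)
qed
lemma nbr_lzero[simp]: "nbr 0 z = 0" by (simp add: vec_eq_iff forall_7 nbr_c)
lemma nbr_rzero[simp]: "nbr z 0 = 0" by (simp add: vec_eq_iff forall_7 nbr_c)

definition ix :: "nat \<Rightarrow> 7" where "ix k = of_nat k"
lemma ix_simps[simp]: "ix (Suc 0) = 1" "ix 1 = 1" "ix 2 = 2" "ix 3 = 3" "ix 4 = 4" "ix 5 = 5" "ix 6 = 6" "ix 7 = 7"
  by (simp_all add: ix_def)

lemma I7: "{1..7::nat} = {1,2,3,4,5,6,7}" by auto

definition idx :: "7 \<Rightarrow> nat" where
  "idx i = (if i = 1 then 1 else if i = 2 then 2 else if i = 3 then 3 else if i = 4 then 4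
     else if i = 5 then 5 else if i = 6 then 6 else 7)"

lemma idx_ix: "k \<in> {1..7} \<Longrightarrow> idx (ix k) = k"
  unfolding I7 by (auto simp: idx_def)

lemma ix_inj: "m \<in> {1..7} \<Longrightarrow> k \<in> {1..7} \<Longrightarrow> ix m = ix k \<longleftrightarrow> m = k"
  by (metis idx_ix)

lemma ix_surj: "\<exists>k\<in>{1..7}. i = ix k"
  using exhaust_7[of i] unfolding I7 by auto

lemma sum_UNIV_ix: "sum g (UNIV::7 set) = (\<Sum>k\<in>{1..7}. g (ix k))"
  unfolding sum_7 I7 by (simp add: ac_simps)

definition lam :: "nat \<Rightarrow> nat" where
  "lam k = (if k \<le> 2 then 1 else if k \<le> 4 then 2 else if k \<le> 6 then 3 else 4)"

definition GF :: "nat \<Rightarrow> (real^7) set" where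
  "GF a = {x. \<forall>m\<in>{1..7}. lam m < a \<longrightarrow> x $ ix m = 0}"

lemma GF_iff: "x \<in> GF a \<longleftrightarrow> (1 < a \<longrightarrow> x$1 = 0 \<and> x$2 = 0) \<and> (2 < a \<longrightarrow> x$3 = 0 \<and> x$4 = 0)
   \<and> (3 < a \<longrightarrow> x$5 = 0 \<and> x$6 = 0) \<and> (4 < a \<longrightarrow> x$7 = 0)"
  unfolding GF_def I7 lam_def by auto

lemma nbr_GF: "x \<in> GF a \<Longrightarrow> y \<in> GF b \<Longrightarrow> 1 \<le> a \<Longrightarrow> 1 \<le> b \<Longrightarrow> nbr x y \<in> GF (a + b)"
proof -
  assume x: "x \<in> GF a" and y: "y \<in> GF b" and a: "1 \<le> a" and b: "1 \<le> b"
  have ab: "(a = 1 \<or> a = 2 \<or> a = 3 \<or> a \<ge> 4) \<and> (b = 1 \<or> b = 2 \<or> b = 3 \<or> b \<ge> 4)"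
    using a b by auto
  from x have x1: "1 < a \<Longrightarrow> x$1 = 0 \<and> x$2 = 0" and x2: "2 < a \<Longrightarrow> x$3 = 0 \<and> x$4 = 0"
    and x3: "3 < a \<Longrightarrow> x$5 = 0 \<and> x$6 = 0" unfolding GF_iff by auto
  from y have y1: "1 < b \<Longrightarrow> y$1 = 0 \<and> y$2 = 0" and y2: "2 < b \<Longrightarrow> y$3 = 0 \<and> y$4 = 0"
    and y3: "3 < b \<Longrightarrow> y$5 = 0 \<and> y$6 = 0" unfolding GF_iff by auto
  have c4: "2 < a + b \<Longrightarrow> nbr x y $ 4 = 0"
  proof -
    assume h: "2 < a + b"
    show ?thesis
    proof (cases "a = 1")
      case True then show ?thesis using h y1 by (simp add: nbr_c4)
    next
      case False then show ?thesis using a x1 by (simp add: nbr_c4)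
    qed
  qed
  have c56: "3 < a + b \<Longrightarrow> nbr x y $ 5 = 0 \<and> nbr x y $ 6 = 0"
  proof -
    assume h: "3 < a + b"
    consider "a = 1" | "a = 2" | "3 \<le> a" using a by linarith
    then show ?thesis
    proof cases
      case 1 then have "2 < b" "1 < b" using h by auto
      then show ?thesis using 1 y1 y2 by (simp add: nbr_c5 nbr_c6)
    next
      case 2 then have "1 < b" "1 < a" using h by auto
      then show ?thesis using 2 y1 x1 by (simp add: nbr_c5 nbr_c6)
    next
      case 3 then have "2 < a" "1 < a" by auto
      then show ?thesis using x1 x2 by (simp add: nbr_c5 nbr_c6)
    qed
  qed
  have c7: "4 < a + b \<Longrightarrow> nbr x y $ 7 = 0"
  proof -
    assume h: "4 < a + b"
    consider "a = 1" | "a = 2" | "a = 3" | "4 \<le> a" using a by linarith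
    then show ?thesis
    proof cases
      case 1 then have "3 < b" "2 < b" "1 < b" using h by auto
      then show ?thesis using 1 y1 y2 y3 by (simp add: nbr_c7)
    next
      case 2 then have "2 < b" "1 < b" "1 < a" using h by auto
      then show ?thesis using 2 y1 y2 x1 by (simp add: nbr_c7)
    next
      case 3 then have "1 < b" "2 < a" "1 < a" using h by auto
      then show ?thesis using 3 y1 x1 x2 by (simp add: nbr_c7)
    next
      case 4 then have "3 < a" "2 < a" "1 < a" by auto
      then show ?thesis using x1 x2 x3 by (simp add: nbr_c7)
    qed
  qed
  show ?thesis unfolding GF_iff using c4 c56 c7 by (simp add: nbr_c1 nbr_c2 nbr_c3)
qed

definition F :: "nat \<Rightarrow> (real^7) set" where
  "F k = {x. \<forall>m. 1 \<le> m \<and> m < k \<longrightarrow> x $ ix m = 0}"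

definition E :: "nat \<Rightarrow> real^7" where "E k = axis (ix k) 1"

lemma E_coord: "m \<in> {1..7} \<Longrightarrow> k \<in> {1..7} \<Longrightarrow> E k $ ix m = (if m = k then 1 else 0)"
  unfolding E_def axis_def using ix_inj by auto

lemma F8: "x \<in> F 8 \<Longrightarrow> x = 0"
  unfolding F_def by (auto simp: vec_eq_iff forall_7 dest: spec[of _ 1] spec[of _ 2] spec[of _ 3]
     spec[of _ 4] spec[of _ 5] spec[of _ 6] spec[of _ 7])

lemma F_mono: "x \<in> F k \<Longrightarrow> j \<le> k \<Longrightarrow> x \<in> F j"
  unfolding F_def by auto

lemma F_diff: "x \<in> F k \<Longrightarrow> y \<in> F k \<Longrightarrow> x - y \<in> F k"
  unfolding F_def by auto
lemma F_scale: "x \<in> F k \<Longrightarrow> a *\<^sub>R x \<in> F k"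
  unfolding F_def by auto
lemma F_sum: "(\<And>i. i \<in> S \<Longrightarrow> g i \<in> F k) \<Longrightarrow> (\<Sum>i\<in>S. g i) \<in> F k"
  unfolding F_def by (auto simp: sum_component intro!: sum.neutral)

lemma sum_delta_if: "finite S \<Longrightarrow> j \<in> S \<Longrightarrow> (\<Sum>m\<in>S. a m * (if m = j then 1 else 0)) = (a j::real)"
  by (simp add: if_distrib cong: if_cong)

locale ipB =
  fixes B :: "real^7 \<Rightarrow> real^7 \<Rightarrow> real"
  assumes ip: "inner_prod B"
begin

lemma bil: "bilinear B" using ip unfolding inner_prod_def by auto
lemma Bsym: "B x y = B y x" using ip unfolding inner_prod_def by auto
lemma Bpos: "x \<noteq> 0 \<Longrightarrow> B x x > 0" using ip unfolding inner_prod_def by auto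

lemma B_ladd: "B (x + y) z = B x z + B y z" using bilinear_ladd[OF bil] .
lemma B_radd: "B z (x + y) = B z x + B z y" using bilinear_radd[OF bil] .
lemma B_lscale: "B (a *\<^sub>R x) z = a * B x z" using bilinear_lmul[OF bil] by simp
lemma B_rscale: "B z (a *\<^sub>R x) = a * B z x" using bilinear_rmul[OF bil] by simp
lemma B_lsub: "B (x - y) z = B x z - B y z" using bilinear_lsub[OF bil] .
lemma B_rsub: "B z (x - y) = B z x - B z y" using bilinear_rsub[OF bil] .
lemma B_lneg: "B (- x) z = - B x z" using bilinear_lneg[OF bil] .
lemma B_rneg: "B z (- x) = - B z x" using bilinear_rneg[OF bil] .
lemma B_lzero[simp]: "B 0 z = 0" using bilinear_lzero[OF bil] .
lemma B_rzero[simp]: "B z 0 = 0" using bilinear_rzero[OF bil] .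
lemma B_lsum: "B (\<Sum>i\<in>S. g i) z = (\<Sum>i\<in>S. B (g i) z)"
proof -
  have "linear (\<lambda>x. B x z)" using bil unfolding bilinear_def by auto
  then show ?thesis by (rule linear_sum)
qed
lemma B_rsum: "B z (\<Sum>i\<in>S. g i) = (\<Sum>i\<in>S. B z (g i))"
proof -
  have "linear (\<lambda>x. B z x)" using bil unfolding bilinear_def by auto
  then show ?thesis by (rule linear_sum)
qed

lemmas Bsimps = B_ladd B_radd B_lscale B_rscale B_lsub B_rsub B_lneg B_rneg B_lsum B_rsum

lemma B_eq: "(\<And>z. B v z = B w z) \<Longrightarrow> v = w"
proof -
  assume h: "\<And>z. B v z = B w z"
  have "B (v - w) (v - w) = 0" using h[of "v - w"] by (simp add: B_lsub)
  then show "v = w" using Bpos[of "v - w"] by auto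
qed


lemma GS: "k \<in> {1..8} \<Longrightarrow> \<exists>f. (\<forall>i\<in>{k..7}. \<forall>j\<in>{k..7}. B (f i) (f j) = (if i = j then 1 else 0))
   \<and> (\<forall>i\<in>{k..7}. f i \<in> F i \<and> f i $ ix i > 0)
   \<and> (\<forall>x\<in>F k. x = (\<Sum>m\<in>{k..7}. B x (f m) *\<^sub>R f m))"
proof (induction "8 - k" arbitrary: k)
  case 0
  then have k: "k = 8" by auto
  show ?case using k F8 by auto
next
  case (Suc n)
  then have k1: "1 \<le> k" "k \<le> 7" and n: "n = 8 - (k+1)" by auto
  from Suc.hyps(1)[OF n] k1 obtain f where
    orth: "\<forall>i\<in>{k+1..7}. \<forall>j\<in>{k+1..7}. B (f i) (f j) = (if i = j then 1 else 0)"
    and inF: "\<forall>i\<in>{k+1..7}. f i \<in> F i \<and> f i $ ix i > 0"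
    and exp: "\<forall>x\<in>F (k+1). x = (\<Sum>m\<in>{k+1..7}. B x (f m) *\<^sub>R f m)" by auto
  define g where "g = E k - (\<Sum>m\<in>{k+1..7}. B (E k) (f m) *\<^sub>R f m)"
  have fmk: "m \<in> {k+1..7} \<Longrightarrow> f m $ ix k = 0" for m
    using inF k1 unfolding F_def by auto
  have gk: "g $ ix k = 1"
    unfolding g_def using fmk k1 by (simp add: sum_component E_coord)
  have EkF: "E k \<in> F k"
    unfolding F_def using k1 E_coord by auto
  have gF: "g \<in> F k"
    unfolding g_def
    apply (rule F_diff[OF EkF])
    apply (rule F_sum)
    apply (rule F_scale)
    subgoal for m by (rule F_mono[of _ m]) (use inF in auto)
    done
  have gnz: "g \<noteq> 0" using gk by auto
  have gorth: "j \<in> {k+1..7} \<Longrightarrow> B g (f j) = 0" for j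
  proof -
    assume j: "j \<in> {k+1..7}"
    have "B g (f j) = B (E k) (f j) - (\<Sum>m\<in>{k+1..7}. B (E k) (f m) * B (f m) (f j))"
      unfolding g_def by (simp add: B_lsub B_lsum B_lscale)
    also have "(\<Sum>m\<in>{k+1..7}. B (E k) (f m) * B (f m) (f j)) = B (E k) (f j)"
      using orth j by (simp add: sum_delta_if)
    finally show ?thesis by simp
  qed
  define s where "s = sqrt (B g g)"
  have Bgg: "B g g > 0" using Bpos gnz by auto
  have s: "s > 0" "s * s = B g g" unfolding s_def using Bgg by auto
  define f' where "f' = f(k := (1 / s) *\<^sub>R g)"
  have f'k: "f' k = (1/s) *\<^sub>R g" unfolding f'_def by simp
  have f'm: "m \<noteq> k \<Longrightarrow> f' m = f m" for m unfolding f'_def by simp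
  have kk: "B (f' k) (f' k) = 1" using s Bgg unfolding f'k by (simp add: B_lscale B_rscale)
  have km: "m \<in> {k+1..7} \<Longrightarrow> B (f' k) (f' m) = 0" for m
    using gorth f'm[of m] unfolding f'k by (simp add: B_lscale)
  have split: "{k..7} = insert k {k+1..7}" using k1 by auto
  have P1: "\<forall>i\<in>{k..7}. \<forall>j\<in>{k..7}. B (f' i) (f' j) = (if i = j then 1 else 0)"
  proof (intro ballI)
    fix i j assume i: "i \<in> {k..7}" and j: "j \<in> {k..7}"
    show "B (f' i) (f' j) = (if i = j then 1 else 0)"
    proof (cases "i = k")
      case True
      then show ?thesis using kk km j by (cases "j = k") auto
    next
      case False
      note iF = False
      then have i': "i \<in> {k+1..7}" using i by auto
      show ?thesis
      proof (cases "j = k")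
        case True
        then show ?thesis using km[OF i'] iF Bsym by auto
      next
        case False
        then show ?thesis using orth i' j iF f'm by auto
      qed
    qed
  qed
  have P2: "\<forall>i\<in>{k..7}. f' i \<in> F i \<and> f' i $ ix i > 0"
  proof
    fix i assume i: "i \<in> {k..7}"
    show "f' i \<in> F i \<and> f' i $ ix i > 0"
    proof (cases "i = k")
      case True
      then show ?thesis using gF gk s unfolding True f'k by (auto intro: F_scale)
    next
      case False
      then show ?thesis using inF i f'm by auto
    qed
  qed
  have P3: "\<forall>x\<in>F k. x = (\<Sum>m\<in>{k..7}. B x (f' m) *\<^sub>R f' m)"
  proof
    fix x assume x: "x \<in> F k"
    define y where "y = x - (x $ ix k) *\<^sub>R g"
    have yF: "y \<in> F (k+1)"
      unfolding F_def y_def mem_Collect_eq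
    proof (intro allI impI)
      fix m assume m: "1 \<le> m \<and> m < k + 1"
      show "(x - x $ ix k *\<^sub>R g) $ ix m = 0"
      proof (cases "m = k")
        case True then show ?thesis using gk by simp
      next
        case False then have "m < k" using m by auto
        then show ?thesis using x gF m unfolding F_def by auto
      qed
    qed
    have yexp: "y = (\<Sum>m\<in>{k+1..7}. B y (f m) *\<^sub>R f m)" using exp yF by blast
    have Byf: "m \<in> {k+1..7} \<Longrightarrow> B y (f m) = B x (f m)" for m
      unfolding y_def using gorth by (simp add: B_lsub B_lscale)
    have Byg: "B y g = 0"
    proof -
      have "B y g = (\<Sum>m\<in>{k+1..7}. B y (f m) * B (f m) g)"
        by (subst yexp) (simp add: B_lsum B_lscale)
      also have "\<dots> = 0" using gorth by (simp add: Bsym)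
      finally show ?thesis .
    qed
    have Bxg: "B x g = x $ ix k * B g g"
    proof -
      have "x = y + (x $ ix k) *\<^sub>R g" unfolding y_def by simp
      then have "B x g = B y g + x $ ix k * B g g" by (metis B_ladd B_lscale)
      then show ?thesis using Byg by simp
    qed
    have "(\<Sum>m\<in>{k..7}. B x (f' m) *\<^sub>R f' m) = B x (f' k) *\<^sub>R f' k + (\<Sum>m\<in>{k+1..7}. B x (f' m) *\<^sub>R f' m)"
      unfolding split by (subst sum.insert) auto
    also have "(\<Sum>m\<in>{k+1..7}. B x (f' m) *\<^sub>R f' m) = (\<Sum>m\<in>{k+1..7}. B y (f m) *\<^sub>R f m)"
      by (rule sum.cong) (auto simp: f'm Byf)
    also have "\<dots> = y" by (rule yexp[symmetric])
    also have "B x (f' k) *\<^sub>R f' k = (x $ ix k) *\<^sub>R g"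
      unfolding f'k using s Bxg Bgg by (simp add: B_rscale field_simps)
    finally show "x = (\<Sum>m\<in>{k..7}. B x (f' m) *\<^sub>R f' m)" unfolding y_def by simp
  qed
  show ?case using P1 P2 P3 by blast
qed

end

definition kz :: "(real^7 \<Rightarrow> real^7 \<Rightarrow> real) \<Rightarrow> real^7 \<Rightarrow> real^7 \<Rightarrow> real^7 \<Rightarrow> real" where
  "kz B X Y Z = (B (nbr X Y) Z - B (nbr Y Z) X + B (nbr Z X) Y) / 2"

lemma vec_axis_exp: "(x::real^7) = (\<Sum>i\<in>UNIV. (x $ i) *\<^sub>R axis i 1)"
proof -
  have "(\<Sum>i\<in>UNIV. (x $ i) *\<^sub>R axis i 1) $ j = x $ j" for j
    by (simp add: sum_component axis_def if_distrib[where f="\<lambda>t. x $ _ * t"] cong: if_cong)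
  then show ?thesis by (simp add: vec_eq_iff)
qed


locale onb = ipB +
  fixes f :: "nat \<Rightarrow> real^7"
  assumes orth: "i \<in> {1..7} \<Longrightarrow> j \<in> {1..7} \<Longrightarrow> B (f i) (f j) = (if i = j then 1 else 0)"
  and fF: "i \<in> {1..7} \<Longrightarrow> f i \<in> F i"
  and fpos: "i \<in> {1..7} \<Longrightarrow> f i $ ix i > 0"
  and fexp: "x = (\<Sum>m\<in>{1..7}. B x (f m) *\<^sub>R f m)"
begin

lemma lin_kz3: "linear (\<lambda>Z. kz B X Y Z)"
  by (rule linearI) (simp_all add: kz_def Bsimps nbr_ladd nbr_radd nbr_lscale nbr_rscale field_simps)
lemma lin_kz2: "linear (\<lambda>Y. kz B X Y Z)"
  by (rule linearI) (simp_all add: kz_def Bsimps nbr_ladd nbr_radd nbr_lscale nbr_rscale field_simps)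
lemma lin_kz1: "linear (\<lambda>X. kz B X Y Z)"
  by (rule linearI) (simp_all add: kz_def Bsimps nbr_ladd nbr_radd nbr_lscale nbr_rscale field_simps)

lemma kz_exp3: "kz B X Y Z = (\<Sum>m\<in>{1..7}. B Z (f m) * kz B X Y (f m))"
proof -
  have "kz B X Y Z = kz B X Y (\<Sum>m\<in>{1..7}. B Z (f m) *\<^sub>R f m)"
    by (rule arg_cong[where f="\<lambda>Z. kz B X Y Z", OF fexp])
  also have "\<dots> = (\<Sum>m\<in>{1..7}. B Z (f m) * kz B X Y (f m))"
    by (simp add: linear_sum[OF lin_kz3] linear_scale[OF lin_kz3])
  finally show ?thesis .
qed

lemma the_B: "(\<And>Z. B v Z = g Z) \<Longrightarrow> (THE v. \<forall>Z. B v Z = g Z) = v"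
  by (rule the_equality) (auto intro: B_eq)

lemma LC_eq: "LC_conn nbr B X Y = (\<Sum>m\<in>{1..7}. kz B X Y (f m) *\<^sub>R f m)"
proof -
  have "B (\<Sum>m\<in>{1..7}. kz B X Y (f m) *\<^sub>R f m) Z = kz B X Y Z" for Z
    by (simp add: Bsimps kz_exp3[of X Y Z] Bsym mult.commute)
  then show ?thesis unfolding LC_conn_def kz_def[symmetric] by (intro the_B) auto
qed

lemma LC_B: "B (LC_conn nbr B X Y) Z = kz B X Y Z"
  unfolding LC_eq by (simp add: Bsimps kz_exp3[of X Y Z] Bsym mult.commute)

lemma lin_LC2: "linear (\<lambda>Y. LC_conn nbr B X Y)"
  unfolding LC_eq
  by (rule linearI) (simp_all add: linear_add[OF lin_kz2] linear_scale[OF lin_kz2] scaleR_add_left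
      sum.distrib scaleR_sum_right)
lemma lin_LC1: "linear (\<lambda>X. LC_conn nbr B X Y)"
  unfolding LC_eq
  by (rule linearI) (simp_all add: linear_add[OF lin_kz1] linear_scale[OF lin_kz1] scaleR_add_left
      sum.distrib scaleR_sum_right)

lemma lin_curv1: "linear (\<lambda>Z. curv nbr B Z X Y)"
  unfolding curv_def
  by (rule linearI) (simp_all add: linear_add[OF lin_LC1] linear_scale[OF lin_LC1]
     linear_add[OF lin_LC2] linear_scale[OF lin_LC2] nbr_ladd nbr_lscale algebra_simps)

lemma lin_curv3: "linear (\<lambda>Y. curv nbr B Z X Y)"
  unfolding curv_def
  by (rule linearI) (simp_all add: linear_add[OF lin_LC2] linear_scale[OF lin_LC2] algebra_simps)

lemma trace_lemma:
  assumes T: "linear T"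
  shows "(\<Sum>i\<in>UNIV. T (axis i 1) $ i) = (\<Sum>a\<in>{1..7}. B (T (f a)) (f a))"
proof -
  have "(\<Sum>i\<in>UNIV. T (axis i 1) $ i) = (\<Sum>i\<in>UNIV. \<Sum>a\<in>{1..7}. B (axis i 1) (f a) * T (f a) $ i)"
  proof (rule sum.cong)
    fix i :: 7
    have "T (axis i 1) = T (\<Sum>a\<in>{1..7}. B (axis i 1) (f a) *\<^sub>R f a)"
      by (rule arg_cong[where f=T, OF fexp])
    also have "\<dots> = (\<Sum>a\<in>{1..7}. B (axis i 1) (f a) *\<^sub>R T (f a))"
      by (simp add: linear_sum[OF T] linear_scale[OF T])
    finally show "T (axis i 1) $ i = (\<Sum>a\<in>{1..7}. B (axis i 1) (f a) * T (f a) $ i)"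
      by (simp add: sum_component)
  qed simp
  also have "\<dots> = (\<Sum>a\<in>{1..7}. \<Sum>i\<in>UNIV. T (f a) $ i * B (axis i 1) (f a))"
    by (subst sum.swap) (simp add: mult.commute)
  also have "\<dots> = (\<Sum>a\<in>{1..7}. B (\<Sum>i\<in>UNIV. T (f a) $ i *\<^sub>R axis i 1) (f a))"
    by (simp add: Bsimps)
  also have "\<dots> = (\<Sum>a\<in>{1..7}. B (T (f a)) (f a))"
    by (simp only: vec_axis_exp[symmetric])
  finally show ?thesis .
qed

lemma ricci_form_eq: "ricci_form nbr B X Y = (\<Sum>a\<in>{1..7}. B (curv nbr B (f a) X Y) (f a))"
  unfolding ricci_form_def by (rule trace_lemma[OF lin_curv1])

lemma lin_ric2: "linear (\<lambda>Y. ricci_form nbr B X Y)"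
  unfolding ricci_form_eq
  by (rule linearI) (simp_all add: linear_add[OF lin_curv3] linear_scale[OF lin_curv3] Bsimps
     sum.distrib sum_distrib_left)

lemma ricci_op_B: "B (ricci_op nbr B X) Y = ricci_form nbr B X Y"
proof -
  define v where "v = (\<Sum>m\<in>{1..7}. ricci_form nbr B X (f m) *\<^sub>R f m)"
  have "B v Z = ricci_form nbr B X Z" for Z
  proof -
    have "ricci_form nbr B X Z = ricci_form nbr B X (\<Sum>m\<in>{1..7}. B Z (f m) *\<^sub>R f m)"
      by (rule arg_cong[where f="\<lambda>Z. ricci_form nbr B X Z", OF fexp])
    also have "\<dots> = (\<Sum>m\<in>{1..7}. B Z (f m) * ricci_form nbr B X (f m))"
      by (simp add: linear_sum[OF lin_ric2] linear_scale[OF lin_ric2])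
    finally show ?thesis unfolding v_def by (simp add: Bsimps Bsym mult.commute)
  qed
  note vB = this
  then have "ricci_op nbr B X = v" unfolding ricci_op_def by (intro the_B) auto
  then show ?thesis using vB by simp
qed

end

lemma ric_alg:
  fixes C :: "nat \<Rightarrow> nat \<Rightarrow> nat \<Rightarrow> real" and lm :: "nat \<Rightarrow> real"
  assumes fin: "finite I"
    and anti: "\<And>i j k. i \<in> I \<Longrightarrow> j \<in> I \<Longrightarrow> k \<in> I \<Longrightarrow> C j i k = - C i j k"
    and filt: "\<And>i j k. i \<in> I \<Longrightarrow> j \<in> I \<Longrightarrow> k \<in> I \<Longrightarrow> C i j k \<noteq> 0 \<Longrightarrow> lm i + lm j \<le> lm k"
    and pos: "\<And>i. i \<in> I \<Longrightarrow> lm i > 0"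
    and G: "\<And>i j k. G i j k = (C i j k - C j k i + C k i j) / 2"
    and b: "b \<in> I" and c: "c \<in> I"
  shows "(\<Sum>a\<in>I. (\<Sum>k\<in>I. G b c k * G a k a) - (\<Sum>k\<in>I. G a c k * G b k a) - (\<Sum>m\<in>I. C a b m * G m c a))
    = - (\<Sum>a\<in>I. \<Sum>k\<in>I. C b a k * C c a k) / 2 + (\<Sum>a\<in>I. \<Sum>k\<in>I. C a k b * C a k c) / 4"
proof -
  have z: "C i j k = 0" if "i \<in> I" "j \<in> I" "k \<in> I" "\<not> lm i + lm j \<le> lm k" for i j k
    using filt that by blast
  have z2: "C i j k * C p q r = 0" if "i \<in> I" "j \<in> I" "k \<in> I" "p \<in> I" "q \<in> I" "r \<in> I"
     "lm i + lm j \<le> lm k \<Longrightarrow> lm p + lm q \<le> lm r \<Longrightarrow> False" for i j k p q r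
    using filt that by fastforce
  have Gaka: "G a k a = 0" if "a \<in> I" "k \<in> I" for a k
  proof -
    have "C a k a = 0" using z[of a k a] pos[of k] that by auto
    moreover have "C k a a = 0" using anti[of a k a] \<open>C a k a = 0\<close> that by auto
    moreover have "C a a k = 0" using anti[of a a k] that by auto
    ultimately show ?thesis by (simp add: G)
  qed
  define S where "S = (\<Sum>a\<in>I. \<Sum>k\<in>I. C b a k * C c a k)"
  define U where "U = (\<Sum>a\<in>I. \<Sum>k\<in>I. C a k b * C a k c)"
  define T where "T = (\<Sum>a\<in>I. \<Sum>k\<in>I. C k a c * C b k a)"
  have sw: "(\<Sum>a\<in>I. \<Sum>k\<in>I. g a k) = (\<Sum>a\<in>I. \<Sum>k\<in>I. g k a)" for g :: "nat \<Rightarrow> nat \<Rightarrow> real"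
    by (rule sum.swap)
  have sc: "(\<And>a k. a \<in> I \<Longrightarrow> k \<in> I \<Longrightarrow> g a k = h a k) \<Longrightarrow>
      (\<Sum>a\<in>I. \<Sum>k\<in>I. g a k) = (\<Sum>a\<in>I. \<Sum>k\<in>I. h a k)" for g h :: "nat \<Rightarrow> nat \<Rightarrow> real"
    by (auto intro!: sum.cong)
  have s0: "(\<And>a k. a \<in> I \<Longrightarrow> k \<in> I \<Longrightarrow> g a k = 0) \<Longrightarrow> (\<Sum>a\<in>I. \<Sum>k\<in>I. g a k) = 0"
    for g :: "nat \<Rightarrow> nat \<Rightarrow> real" by (auto intro!: sum.neutral)
  have A0: "(\<Sum>a\<in>I. \<Sum>k\<in>I. G b c k * G a k a) = 0" by (rule s0) (simp add: Gaka)
  have t1: "(\<Sum>a\<in>I. \<Sum>k\<in>I. C a c k * C b k a) = 0"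
    by (rule s0, rule z2) (use b c pos[OF b] pos[OF c] in auto)
  have t6: "(\<Sum>a\<in>I. \<Sum>k\<in>I. C c k a * C a b k) = 0"
    by (rule s0, rule z2) (use b c pos[OF b] pos[OF c] in auto)
  have t34: "(\<Sum>a\<in>I. \<Sum>k\<in>I. C c k a * C b k a) = (\<Sum>a\<in>I. \<Sum>k\<in>I. C a c k * C a b k)"
    apply (subst sw) apply (rule sc)
    subgoal for a k using anti[of a c k] anti[of a b k] b c by simp
    done
  have t25: "(\<Sum>a\<in>I. \<Sum>k\<in>I. C c k a * C k a b) = (\<Sum>a\<in>I. \<Sum>k\<in>I. C a c k * C k a b)"
    apply (subst sw) apply (rule sc)
    subgoal for a k using anti[of a c k] anti[of k a b] b c by simp
    done
  have t79: "(\<Sum>a\<in>I. \<Sum>k\<in>I. C k a c * C a b k) = T"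
    unfolding T_def apply (subst sw) apply (rule sc)
    subgoal for a k using anti[of k a c] anti[of b k a] b c by simp
    done
  have t8: "(\<Sum>a\<in>I. \<Sum>k\<in>I. C k a c * C k a b) = U"
    unfolding U_def apply (subst sw) apply (rule sc)
    subgoal for a k by (simp add: mult.commute)
    done
  have A1: "(\<Sum>a\<in>I. \<Sum>k\<in>I. G a c k * G b k a) = (2 * T - U) / 4"
  proof -
    have e: "G a c k * G b k a = (C a c k * C b k a - C a c k * C k a b + C a c k * C a b k
        - C c k a * C b k a + C c k a * C k a b - C c k a * C a b k
        + C k a c * C b k a - C k a c * C k a b + C k a c * C a b k) / 4" for a k
      unfolding G by (simp add: algebra_simps)
    have "(\<Sum>a\<in>I. \<Sum>k\<in>I. G a c k * G b k a) = (\<Sum>a\<in>I. \<Sum>k\<in>I. (C a c k * C b k a - C a c k * C k a b + C a c k * C a b k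
        - C c k a * C b k a + C c k a * C k a b - C c k a * C a b k
        + C k a c * C b k a - C k a c * C k a b + C k a c * C a b k)) / 4"
      unfolding e by (simp add: sum_divide_distrib)
    also have "(\<Sum>a\<in>I. \<Sum>k\<in>I. (C a c k * C b k a - C a c k * C k a b + C a c k * C a b k
        - C c k a * C b k a + C c k a * C k a b - C c k a * C a b k
        + C k a c * C b k a - C k a c * C k a b + C k a c * C a b k)) =
      ((\<Sum>a\<in>I. \<Sum>k\<in>I. C a c k * C b k a) - (\<Sum>a\<in>I. \<Sum>k\<in>I. C a c k * C k a b)
       + (\<Sum>a\<in>I. \<Sum>k\<in>I. C a c k * C a b k) - (\<Sum>a\<in>I. \<Sum>k\<in>I. C c k a * C b k a)
       + (\<Sum>a\<in>I. \<Sum>k\<in>I. C c k a * C k a b) - (\<Sum>a\<in>I. \<Sum>k\<in>I. C c k a * C a b k)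
       + (\<Sum>a\<in>I. \<Sum>k\<in>I. C k a c * C b k a) - (\<Sum>a\<in>I. \<Sum>k\<in>I. C k a c * C k a b)
       + (\<Sum>a\<in>I. \<Sum>k\<in>I. C k a c * C a b k))"
      by (simp only: sum.distrib sum_subtractf)
    finally show ?thesis
      using t1 t6 t34 t25 t79 t8 unfolding T_def by simp
  qed
  have i0: "(\<Sum>a\<in>I. \<Sum>m\<in>I. C a b m * C m c a) = 0"
    by (rule s0, rule z2) (use b c pos[OF b] pos[OF c] in auto)
  have ii: "(\<Sum>a\<in>I. \<Sum>m\<in>I. C a b m * C c a m) = - S"
    unfolding S_def sum_negf[symmetric] apply (rule sc)
    subgoal for a m using anti[of a b m] anti[of c a m] b c by simp
    done
  have iii: "(\<Sum>a\<in>I. \<Sum>m\<in>I. C a b m * C a m c) = - T"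
    unfolding T_def sum_negf[symmetric] apply (subst (2) sw) apply (rule sc)
    subgoal for a m using anti[of a b m] anti[of a m c] b c by simp
    done
  have A2: "(\<Sum>a\<in>I. \<Sum>m\<in>I. C a b m * G m c a) = (S - T) / 2"
  proof -
    have e: "C a b m * G m c a = (C a b m * C m c a - C a b m * C c a m + C a b m * C a m c) / 2" for a m
      unfolding G by (simp add: algebra_simps)
    have "(\<Sum>a\<in>I. \<Sum>m\<in>I. C a b m * G m c a) = (\<Sum>a\<in>I. \<Sum>m\<in>I. (C a b m * C m c a - C a b m * C c a m + C a b m * C a m c)) / 2"
      unfolding e by (simp add: sum_divide_distrib)
    also have "(\<Sum>a\<in>I. \<Sum>m\<in>I. (C a b m * C m c a - C a b m * C c a m + C a b m * C a m c)) = (\<Sum>a\<in>I. \<Sum>m\<in>I. C a b m * C m c a)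
       - (\<Sum>a\<in>I. \<Sum>m\<in>I. C a b m * C c a m) + (\<Sum>a\<in>I. \<Sum>m\<in>I. C a b m * C a m c)"
      by (simp only: sum.distrib sum_subtractf)
    finally show ?thesis using i0 ii iii by simp
  qed
  have "(\<Sum>a\<in>I. (\<Sum>k\<in>I. G b c k * G a k a) - (\<Sum>k\<in>I. G a c k * G b k a) - (\<Sum>m\<in>I. C a b m * G m c a))
     = (\<Sum>a\<in>I. \<Sum>k\<in>I. G b c k * G a k a) - (\<Sum>a\<in>I. \<Sum>k\<in>I. G a c k * G b k a)
       - (\<Sum>a\<in>I. \<Sum>m\<in>I. C a b m * G m c a)"
    by (simp add: sum_subtractf)
  also have "\<dots> = - S / 2 + U / 4" unfolding A0 A1 A2 by (simp add: field_simps)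
  finally show ?thesis unfolding S_def U_def .
qed



lemma lam_mono: "m \<le> k \<Longrightarrow> lam m \<le> lam k"
  unfolding lam_def by auto
lemma lam_pos: "lam k \<ge> 1"
  unfolding lam_def by auto

lemma F_GF: "i \<in> {1..7} \<Longrightarrow> x \<in> F i \<Longrightarrow> x \<in> GF (lam i)"
  unfolding GF_def F_def
proof (intro CollectI ballI impI)
  fix m assume i: "i \<in> {1..7}" and x: "x \<in> {x. \<forall>m. 1 \<le> m \<and> m < i \<longrightarrow> x $ ix m = 0}"
    and m: "m \<in> {1..7}" and l: "lam m < lam i"
  have "m < i" using lam_mono[of i m] l by (cases "i \<le> m") auto
  then show "x $ ix m = 0" using x m by auto
qed

lemma GF_F: "k \<in> {1..7} \<Longrightarrow> lam k < a \<Longrightarrow> x \<in> GF a \<Longrightarrow> x \<in> F (k+1)"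
  unfolding GF_def F_def
proof (intro CollectI allI impI)
  fix m assume k: "k \<in> {1..7}" and l: "lam k < a" and x: "x \<in> {x. \<forall>m\<in>{1..7}. lam m < a \<longrightarrow> x $ ix m = 0}"
    and m: "1 \<le> m \<and> m < k + 1"
  have "lam m < a" using lam_mono[of m k] l m by auto
  then show "x $ ix m = 0" using x m k by auto
qed

context onb begin

definition Cf :: "nat \<Rightarrow> nat \<Rightarrow> nat \<Rightarrow> real" where
  "Cf i j k = B (nbr (f i) (f j)) (f k)"

lemma perp: assumes k: "k \<in> {1..7}" and x: "x \<in> F (k+1)" shows "B x (f k) = 0"
proof -
  have "\<forall>m. m \<in> {1..k} \<longrightarrow> B x (f m) = 0"
  proof (intro allI)
    fix m show "m \<in> {1..k} \<longrightarrow> B x (f m) = 0"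
    proof (induction m rule: less_induct)
      case (less m)
      show ?case
      proof
        assume m: "m \<in> {1..k}"
        have m7: "m \<in> {1..7}" using m k by auto
        have "x $ ix m = 0" using x m unfolding F_def by auto
        moreover have "x $ ix m = (\<Sum>m'\<in>{1..7}. B x (f m') * f m' $ ix m)"
          by (subst fexp) (simp add: sum_component)
        moreover have "(\<Sum>m'\<in>{1..7}. B x (f m') * f m' $ ix m) = B x (f m) * f m $ ix m"
        proof -
          have "(\<Sum>m'\<in>{1..7}. B x (f m') * f m' $ ix m) = B x (f m) * f m $ ix m
              + (\<Sum>m'\<in>{1..7}-{m}. B x (f m') * f m' $ ix m)"
            by (rule sum.remove) (use m7 in auto)
          moreover have "(\<Sum>m'\<in>{1..7}-{m}. B x (f m') * f m' $ ix m) = 0"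
          proof (rule sum.neutral, rule ballI)
            fix m' assume m': "m' \<in> {1..7} - {m}"
            show "B x (f m') * f m' $ ix m = 0"
            proof (cases "m' < m")
              case True
              then have "B x (f m') = 0" using less.IH[of m'] m m' by auto
              then show ?thesis by simp
            next
              case False
              then have "m < m'" using m' by auto
              then have "f m' $ ix m = 0" using fF[of m'] m' m unfolding F_def by auto
              then show ?thesis by simp
            qed
          qed
          ultimately show ?thesis by simp
        qed
        ultimately show "B x (f m) = 0" using fpos[OF m7] by simp
      qed
    qed
  qed
  then show ?thesis using k by auto
qed


lemma nbr_exp: "nbr (f a) (f b) = (\<Sum>m\<in>{1..7}. Cf a b m *\<^sub>R f m)"
  unfolding Cf_def by (rule fexp)

lemma Cf_zero: "i \<in> {1..7} \<Longrightarrow> j \<in> {1..7} \<Longrightarrow> k \<in> {1..7} \<Longrightarrow> lam k < lam i + lam j \<Longrightarrow> Cf i j k = 0"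
proof -
  assume i: "i \<in> {1..7}" and j: "j \<in> {1..7}" and k: "k \<in> {1..7}" and l: "lam k < lam i + lam j"
  have "nbr (f i) (f j) \<in> GF (lam i + lam j)"
    by (rule nbr_GF) (use F_GF fF i j lam_pos in auto)
  then have "nbr (f i) (f j) \<in> F (k+1)" using GF_F k l by blast
  then show ?thesis unfolding Cf_def using perp k by blast
qed

lemma Cf_anti: "Cf j i k = - Cf i j k"
  unfolding Cf_def by (metis nbr_antisym B_lneg)

abbreviation "Gm i j k \<equiv> kz B (f i) (f j) (f k)"

lemma Gm_eq: "Gm i j k = (Cf i j k - Cf j k i + Cf k i j) / 2"
  unfolding kz_def Cf_def ..

lemma kz2_exp: "kz B X (\<Sum>k\<in>{1..7}. c k *\<^sub>R f k) Z = (\<Sum>k\<in>{1..7}. c k * kz B X (f k) Z)"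
  by (simp add: linear_sum[OF lin_kz2] linear_scale[OF lin_kz2])
lemma kz1_exp: "kz B (\<Sum>k\<in>{1..7}. c k *\<^sub>R f k) Y Z = (\<Sum>k\<in>{1..7}. c k * kz B (f k) Y Z)"
  by (simp add: linear_sum[OF lin_kz1] linear_scale[OF lin_kz1])

lemma ric_Gform: "ricci_form nbr B (f b) (f c) = (\<Sum>a\<in>{1..7}.
   (\<Sum>k\<in>{1..7}. Gm b c k * Gm a k a) - (\<Sum>k\<in>{1..7}. Gm a c k * Gm b k a) - (\<Sum>m\<in>{1..7}. Cf a b m * Gm m c a))"
  unfolding ricci_form_eq
proof (rule sum.cong[OF refl])
  fix a
  have "B (curv nbr B (f a) (f b) (f c)) (f a) =
     kz B (f a) (LC_conn nbr B (f b) (f c)) (f a) - kz B (f b) (LC_conn nbr B (f a) (f c)) (f a)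
     - kz B (nbr (f a) (f b)) (f c) (f a)"
    unfolding curv_def by (simp add: B_lsub LC_B)
  also have "\<dots> = (\<Sum>k\<in>{1..7}. Gm b c k * Gm a k a) - (\<Sum>k\<in>{1..7}. Gm a c k * Gm b k a)
     - (\<Sum>m\<in>{1..7}. Cf a b m * Gm m c a)"
    unfolding LC_eq nbr_exp kz2_exp kz1_exp ..
  finally show "B (curv nbr B (f a) (f b) (f c)) (f a) = (\<Sum>k\<in>{1..7}. Gm b c k * Gm a k a) - (\<Sum>k\<in>{1..7}. Gm a c k * Gm b k a)
     - (\<Sum>m\<in>{1..7}. Cf a b m * Gm m c a)" .
qed

lemma ric_C: "b \<in> {1..7} \<Longrightarrow> c \<in> {1..7} \<Longrightarrow> ricci_form nbr B (f b) (f c) =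
   - (\<Sum>a\<in>{1..7}. \<Sum>k\<in>{1..7}. Cf b a k * Cf c a k) / 2 + (\<Sum>a\<in>{1..7}. \<Sum>k\<in>{1..7}. Cf a k b * Cf a k c) / 4"
proof -
  assume b: "b \<in> {1..7}" and c: "c \<in> {1..7}"
  show ?thesis unfolding ric_Gform
  proof (rule ric_alg[where lm = "\<lambda>i. real (lam i)"])
    show "finite {1..7::nat}" by simp
    show "Cf j i k = - Cf i j k" for i j k by (rule Cf_anti)
    show "real (lam i) + real (lam j) \<le> real (lam k)"
      if "i \<in> {1..7}" "j \<in> {1..7}" "k \<in> {1..7}" "Cf i j k \<noteq> 0" for i j k
    proof (rule ccontr)
      assume "\<not> real (lam i) + real (lam j) \<le> real (lam k)"
      then have "lam k < lam i + lam j" by linarith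
      then show False using Cf_zero that by blast
    qed
    show "0 < real (lam i)" for i using lam_pos[of i] by simp
    show "Gm i j k = (Cf i j k - Cf j k i + Cf k i j) / 2" for i j k by (rule Gm_eq)
  qed (use b c in auto)
qed

lemma ric_sym: "b \<in> {1..7} \<Longrightarrow> c \<in> {1..7} \<Longrightarrow> ricci_form nbr B (f b) (f c) = ricci_form nbr B (f c) (f b)"
  by (simp add: ric_C mult.commute)

end

lemma b12: "nbr (axis 1 1) (axis 2 (1::real)) = axis 4 1"
  by (simp add: vec_eq_iff forall_7 nbr_c axis_def)
lemma b13: "nbr (axis 1 1) (axis 3 (1::real)) = 0"
  by (simp add: vec_eq_iff forall_7 nbr_c axis_def)
lemma b14: "nbr (axis 1 1) (axis 4 (1::real)) = axis 5 1"
  by (simp add: vec_eq_iff forall_7 nbr_c axis_def)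
lemma b15: "nbr (axis 1 1) (axis 5 (1::real)) = axis 7 1"
  by (simp add: vec_eq_iff forall_7 nbr_c axis_def)
lemma b16: "nbr (axis 1 1) (axis 6 (1::real)) = axis 7 1"
  by (simp add: vec_eq_iff forall_7 nbr_c axis_def)
lemma b17: "nbr (axis 1 1) (axis 7 (1::real)) = 0"
  by (simp add: vec_eq_iff forall_7 nbr_c axis_def)
lemma b23: "nbr (axis 2 1) (axis 3 (1::real)) = axis 6 1"
  by (simp add: vec_eq_iff forall_7 nbr_c axis_def)
lemma b24: "nbr (axis 2 1) (axis 4 (1::real)) = axis 6 1"
  by (simp add: vec_eq_iff forall_7 nbr_c axis_def)
lemma b25: "nbr (axis 2 1) (axis 5 (1::real)) = axis 7 1"
  by (simp add: vec_eq_iff forall_7 nbr_c axis_def)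
lemma b26: "nbr (axis 2 1) (axis 6 (1::real)) = 0"
  by (simp add: vec_eq_iff forall_7 nbr_c axis_def)
lemma b34: "nbr (axis 3 1) (axis 4 (1::real)) = - axis 7 1"
  by (simp add: vec_eq_iff forall_7 nbr_c axis_def)
lemma b36: "nbr (axis 3 1) (axis 6 (1::real)) = 0"
  by (simp add: vec_eq_iff forall_7 nbr_c axis_def)

lemma ax: "axis i (1::real) $ j = (if i = j then 1 else 0)" by (simp add: axis_def)

definition tt :: "(real^7 \<Rightarrow> real^7) \<Rightarrow> real" where "tt D = D (axis 1 1) $ 1"

lemma der_class:
  assumes der: "derivation nbr D"
  shows "D (axis 2 1) $ 1 = 0 \<and> D (axis 3 1) $ 1 = 0 \<and> D (axis 4 1) $ 1 = 0 \<and> D (axis 5 1) $ 1 = 0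
    \<and> D (axis 6 1) $ 1 = 0 \<and> D (axis 7 1) $ 1 = 0
    \<and> D (axis 3 1) $ 2 = 0 \<and> D (axis 4 1) $ 2 = 0 \<and> D (axis 5 1) $ 2 = 0
    \<and> D (axis 6 1) $ 2 = 0 \<and> D (axis 7 1) $ 2 = 0
    \<and> D (axis 4 1) $ 3 = 0 \<and> D (axis 5 1) $ 3 = 0 \<and> D (axis 6 1) $ 3 = 0 \<and> D (axis 7 1) $ 3 = 0
    \<and> D (axis 5 1) $ 4 = 0 \<and> D (axis 6 1) $ 4 = 0 \<and> D (axis 7 1) $ 4 = 0
    \<and> D (axis 6 1) $ 5 = 0 \<and> D (axis 7 1) $ 5 = 0 \<and> D (axis 7 1) $ 6 = 0
    \<and> D (axis 1 1) $ 1 = tt D \<and> D (axis 2 1) $ 2 = tt D \<and> D (axis 3 1) $ 3 = 2 * tt D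
    \<and> D (axis 4 1) $ 4 = 2 * tt D \<and> D (axis 5 1) $ 5 = 3 * tt D \<and> D (axis 6 1) $ 6 = 3 * tt D
    \<and> D (axis 7 1) $ 7 = 4 * tt D"
proof -
  have lin: "linear D" using der unfolding derivation_def by auto
  have eq: "D (nbr x y) $ m = nbr (D x) y $ m + nbr x (D y) $ m" for x y m
    using der unfolding derivation_def by simp
  have D0: "D 0 = 0" using linear_0[OF lin] .
  have Dneg: "D (- x) = - D x" for x using linear_neg[OF lin] .
  note e245 = eq[of "axis 2 1" "axis 4 1" 5, unfolded b24, simplified nbr_c D0 Dneg ax, simplified]
  note e267 = eq[of "axis 2 1" "axis 6 1" 7, unfolded b26, simplified nbr_c D0 Dneg ax, simplified]
  note e367 = eq[of "axis 3 1" "axis 6 1" 7, unfolded b36, simplified nbr_c D0 Dneg ax, simplified]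
  note e234 = eq[of "axis 2 1" "axis 3 1" 4, unfolded b23, simplified nbr_c D0 Dneg ax, simplified]
  note e121 = eq[of "axis 1 1" "axis 2 1" 1, unfolded b12, simplified nbr_c D0 Dneg ax, simplified]
  note e141 = eq[of "axis 1 1" "axis 4 1" 1, unfolded b14, simplified nbr_c D0 Dneg ax, simplified]
  note e231 = eq[of "axis 2 1" "axis 3 1" 1, unfolded b23, simplified nbr_c D0 Dneg ax, simplified]
  note e151 = eq[of "axis 1 1" "axis 5 1" 1, unfolded b15, simplified nbr_c D0 Dneg ax, simplified]
  note e134 = eq[of "axis 1 1" "axis 3 1" 4, unfolded b13, simplified nbr_c D0 Dneg ax, simplified]
  note e122 = eq[of "axis 1 1" "axis 2 1" 2, unfolded b12, simplified nbr_c D0 Dneg ax, simplified]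
  note e142 = eq[of "axis 1 1" "axis 4 1" 2, unfolded b14, simplified nbr_c D0 Dneg ax, simplified]
  note e232 = eq[of "axis 2 1" "axis 3 1" 2, unfolded b23, simplified nbr_c D0 Dneg ax, simplified]
  note e152 = eq[of "axis 1 1" "axis 5 1" 2, unfolded b15, simplified nbr_c D0 Dneg ax, simplified]
  note e123 = eq[of "axis 1 1" "axis 2 1" 3, unfolded b12, simplified nbr_c D0 Dneg ax, simplified]
  note e143 = eq[of "axis 1 1" "axis 4 1" 3, unfolded b14, simplified nbr_c D0 Dneg ax, simplified]
  note e233 = eq[of "axis 2 1" "axis 3 1" 3, unfolded b23, simplified nbr_c D0 Dneg ax, simplified]
  note e153 = eq[of "axis 1 1" "axis 5 1" 3, unfolded b15, simplified nbr_c D0 Dneg ax, simplified]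
  note e144 = eq[of "axis 1 1" "axis 4 1" 4, unfolded b14, simplified nbr_c D0 Dneg ax, simplified]
  note e175 = eq[of "axis 1 1" "axis 7 1" 5, unfolded b17, simplified nbr_c D0 Dneg ax, simplified]
  note e255 = eq[of "axis 2 1" "axis 5 1" 5, unfolded b25, simplified nbr_c D0 Dneg ax, simplified]
  note e156 = eq[of "axis 1 1" "axis 5 1" 6, unfolded b15, simplified nbr_c D0 Dneg ax, simplified]
  note e124 = eq[of "axis 1 1" "axis 2 1" 4, unfolded b12, simplified nbr_c D0 Dneg ax, simplified]
  note e145 = eq[of "axis 1 1" "axis 4 1" 5, unfolded b14, simplified nbr_c D0 Dneg ax, simplified]
  note e246 = eq[of "axis 2 1" "axis 4 1" 6, unfolded b24, simplified nbr_c D0 Dneg ax, simplified]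
  note e167 = eq[of "axis 1 1" "axis 6 1" 7, unfolded b16, simplified nbr_c D0 Dneg ax, simplified]
  note e347 = eq[of "axis 3 1" "axis 4 1" 7, unfolded b34, simplified nbr_c D0 Dneg ax, simplified]
  note e157 = eq[of "axis 1 1" "axis 5 1" 7, unfolded b15, simplified nbr_c D0 Dneg ax, simplified]
  note e136 = eq[of "axis 1 1" "axis 3 1" 6, unfolded b13, simplified nbr_c D0 Dneg ax, simplified]
  note e146 = eq[of "axis 1 1" "axis 4 1" 6, unfolded b14, simplified nbr_c D0 Dneg ax, simplified]
  note e236 = eq[of "axis 2 1" "axis 3 1" 6, unfolded b23, simplified nbr_c D0 Dneg ax, simplified]
  show ?thesis unfolding tt_def using e245 e267 e367 e234 e121 e141 e231 e151 e134 e122 e142 e232 e152 e123 e143 e233 e153 e144 e175 e255 e156 e124 e145 e246 e167 e347 e157 e136 e146 e236 by linarith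
qed


lemma dz: assumes der: "derivation nbr D" and "i \<in> {1..7}" "j \<in> {1..7}" "i < j"
  shows "D (axis (ix j) 1) $ ix i = 0"
  using der_class[OF der] assms(2-4) unfolding I7 by auto

lemma dd: assumes der: "derivation nbr D" and "k \<in> {1..7}"
  shows "D (axis (ix k) 1) $ ix k = real (lam k) * tt D"
  using der_class[OF der] assms(2) unfolding I7 by (auto simp: lam_def)

lemma D_coord: assumes der: "derivation nbr D"
  shows "D x $ ix i = (\<Sum>j\<in>{1..7}. x $ ix j * D (axis (ix j) 1) $ ix i)"
proof -
  have lin: "linear D" using der unfolding derivation_def by auto
  have "D x = D (\<Sum>j\<in>UNIV. (x $ j) *\<^sub>R axis j 1)" by (rule arg_cong[where f=D, OF vec_axis_exp])
  also have "\<dots> = (\<Sum>j\<in>UNIV. (x $ j) *\<^sub>R D (axis j 1))"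
    by (simp add: linear_sum[OF lin] linear_scale[OF lin])
  finally have "D x $ ix i = (\<Sum>j\<in>UNIV. x $ j * D (axis j 1) $ ix i)" by (simp add: sum_component)
  then show ?thesis by (simp add: sum_UNIV_ix)
qed

lemma D_F: assumes der: "derivation nbr D" and k: "k \<in> {1..7}" and x: "x \<in> F k"
  shows "D x \<in> F k" and "D x $ ix k = real (lam k) * tt D * x $ ix k"
proof -
  have xz: "j < k \<Longrightarrow> 1 \<le> j \<Longrightarrow> x $ ix j = 0" for j :: nat using x unfolding F_def by auto
  show "D x \<in> F k" unfolding F_def
  proof (intro CollectI allI impI)
    fix i assume i: "1 \<le> i \<and> i < k"
    have "D x $ ix i = (\<Sum>j\<in>{1..7}. x $ ix j * D (axis (ix j) 1) $ ix i)" by (rule D_coord[OF der])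
    also have "\<dots> = 0"
    proof (rule sum.neutral, rule ballI)
      fix j :: nat assume j: "j \<in> {1..7}"
      show "x $ ix j * D (axis (ix j) 1) $ ix i = 0"
      proof (cases "j < k")
        case True then show ?thesis using xz j by auto
      next
        case False then show ?thesis using dz[OF der, of i j] i j k by auto
      qed
    qed
    finally show "D x $ ix i = 0" .
  qed
  have "D x $ ix k = (\<Sum>j\<in>{1..7}. x $ ix j * D (axis (ix j) 1) $ ix k)" by (rule D_coord[OF der])
  also have "\<dots> = x $ ix k * D (axis (ix k) 1) $ ix k
     + (\<Sum>j\<in>{1..7}-{k}. x $ ix j * D (axis (ix j) 1) $ ix k)"
    by (rule sum.remove) (use k in auto)
  finally have DS: "D x $ ix k = x $ ix k * D (axis (ix k) 1) $ ix k
     + (\<Sum>j\<in>{1..7}-{k}. x $ ix j * D (axis (ix j) 1) $ ix k)" .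
  moreover have "(\<Sum>j\<in>{1..7}-{k}. x $ ix j * D (axis (ix j) 1) $ ix k) = 0"
  proof (rule sum.neutral, rule ballI)
    fix j assume j: "j \<in> {1..7}-{k}"
    show "x $ ix j * D (axis (ix j) 1) $ ix k = 0"
    proof (cases "j < k")
      case True then show ?thesis using xz j by auto
    next
      case False then show ?thesis using dz[OF der, of k j] j k by auto
    qed
  qed
  then show "D x $ ix k = real (lam k) * tt D * x $ ix k" using DS dd[OF der k] by simp
qed

lemma wsum:
  fixes C :: "nat \<Rightarrow> nat \<Rightarrow> nat \<Rightarrow> real" and w R :: "nat \<Rightarrow> real"
  assumes fin: "finite I"
    and anti: "\<And>i j k. C j i k = - C i j k"
    and R: "\<And>b. b \<in> I \<Longrightarrow> R b = - (\<Sum>a\<in>I. \<Sum>k\<in>I. C b a k * C b a k) / 2 + (\<Sum>a\<in>I. \<Sum>k\<in>I. C a k b * C a k b) / 4"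
  shows "(\<Sum>b\<in>I. w b * R b) = (\<Sum>i\<in>I. \<Sum>j\<in>I. \<Sum>k\<in>I. (w k - w i - w j) * (C i j k * C i j k)) / 4"
proof -
  define P where "P = (\<Sum>i\<in>I. \<Sum>j\<in>I. \<Sum>k\<in>I. w i * (C i j k * C i j k))"
  define Q where "Q = (\<Sum>i\<in>I. \<Sum>j\<in>I. \<Sum>k\<in>I. w j * (C i j k * C i j k))"
  define W where "W = (\<Sum>i\<in>I. \<Sum>j\<in>I. \<Sum>k\<in>I. w k * (C i j k * C i j k))"
  have PQ: "P = Q"
  proof -
    have "P = (\<Sum>j\<in>I. \<Sum>i\<in>I. \<Sum>k\<in>I. w i * (C i j k * C i j k))" unfolding P_def by (rule sum.swap)
    also have "\<dots> = Q" unfolding Q_def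
    proof (intro sum.cong refl)
      fix x y k show "w y * (C y x k * C y x k) = w y * (C x y k * C x y k)" using anti[of x y k] by simp
    qed
    finally show ?thesis .
  qed
  have e1: "(\<Sum>b\<in>I. w b * (\<Sum>a\<in>I. \<Sum>k\<in>I. C b a k * C b a k)) = P"
    unfolding P_def by (simp add: sum_distrib_left)
  have e2: "(\<Sum>b\<in>I. w b * (\<Sum>a\<in>I. \<Sum>k\<in>I. C a k b * C a k b)) = W"
  proof -
    have "(\<Sum>b\<in>I. w b * (\<Sum>a\<in>I. \<Sum>k\<in>I. C a k b * C a k b)) = (\<Sum>b\<in>I. \<Sum>a\<in>I. \<Sum>k\<in>I. w b * (C a k b * C a k b))"
      by (simp add: sum_distrib_left)
    also have "\<dots> = (\<Sum>a\<in>I. \<Sum>b\<in>I. \<Sum>k\<in>I. w b * (C a k b * C a k b))" by (rule sum.swap)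
    also have "\<dots> = (\<Sum>a\<in>I. \<Sum>k\<in>I. \<Sum>b\<in>I. w b * (C a k b * C a k b))"
      by (rule sum.cong[OF refl], rule sum.swap)
    finally show ?thesis unfolding W_def .
  qed
  have "(\<Sum>b\<in>I. w b * R b) = (\<Sum>b\<in>I. - (w b * (\<Sum>a\<in>I. \<Sum>k\<in>I. C b a k * C b a k)) / 2
        + w b * (\<Sum>a\<in>I. \<Sum>k\<in>I. C a k b * C a k b) / 4)"
    by (intro sum.cong refl) (simp add: R algebra_simps)
  also have "\<dots> = - P / 2 + W / 4"
    unfolding e1[symmetric] e2[symmetric] by (simp add: sum.distrib sum_subtractf sum_divide_distrib sum_negf)
  also have "\<dots> = (W - P - Q) / 4" using PQ by simp
  also have "W - P - Q = (\<Sum>i\<in>I. \<Sum>j\<in>I. \<Sum>k\<in>I. (w k - w i - w j) * (C i j k * C i j k))"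
    unfolding P_def Q_def W_def by (simp add: left_diff_distrib sum_subtractf)
  finally show ?thesis .
qed


definition wt :: "nat \<Rightarrow> real" where
  "wt i = (if i = 1 then -1 else if i = 2 then 1 else if i = 5 then -1 else if i = 6 then 1 else 0)"

lemma wt_arith: "i \<in> {1..7} \<Longrightarrow> j \<in> {1..7} \<Longrightarrow> k \<in> {1..7} \<Longrightarrow> lam k = lam i + lam j \<Longrightarrow> i \<noteq> j \<Longrightarrow>
  \<not> ((i = 2 \<and> (j = 3 \<or> j = 4) \<and> k = 5) \<or> ((i = 3 \<or> i = 4) \<and> j = 2 \<and> k = 5) \<or> (i = 2 \<and> j = 6 \<and> k = 7)
     \<or> (i = 6 \<and> j = 2 \<and> k = 7)) \<Longrightarrow> wt k - wt i - wt j \<ge> 0"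
  unfolding I7 insert_iff empty_iff
  apply (elim disjE)
  apply (simp_all add: lam_def wt_def)
  done

lemma sq_sum0: "finite I \<Longrightarrow> (\<Sum>a\<in>I. \<Sum>k\<in>I. g a k * g a k) = (0::real) \<Longrightarrow> a \<in> I \<Longrightarrow> k \<in> I \<Longrightarrow> g a k = 0"
proof -
  assume fin: "finite I" and s: "(\<Sum>a\<in>I. \<Sum>k\<in>I. g a k * g a k) = 0" and a: "a \<in> I" and k: "k \<in> I"
  have "(\<Sum>k\<in>I. g a k * g a k) = 0"
    using s fin a by (subst (asm) sum_nonneg_eq_0_iff) (auto intro: sum_nonneg)
  then have "g a k * g a k = 0" using fin k by (subst (asm) sum_nonneg_eq_0_iff) auto
  then show ?thesis by simp
qed


context onb begin

lemma nbr_single: assumes a: "a \<in> {1..7}" and b: "b \<in> {1..7}" and p: "p \<in> {1..7}"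
  and z: "\<And>m. m \<in> {1..7} \<Longrightarrow> m \<noteq> p \<Longrightarrow> Cf a b m = 0"
  shows "nbr (f a) (f b) = Cf a b p *\<^sub>R f p"
proof -
  have "nbr (f a) (f b) = (\<Sum>m\<in>{1..7}. Cf a b m *\<^sub>R f m)" by (rule nbr_exp)
  also have "\<dots> = Cf a b p *\<^sub>R f p + (\<Sum>m\<in>{1..7}-{p}. Cf a b m *\<^sub>R f m)"
    by (rule sum.remove) (use p in auto)
  also have "(\<Sum>m\<in>{1..7}-{p}. Cf a b m *\<^sub>R f m) = 0"
    by (rule sum.neutral) (use z in auto)
  finally show ?thesis by simp
qed

lemma fc: "f 1 $ 1 > 0" "f 3 $ 3 > 0" "f 4 $ 4 > 0" "f 5 $ 5 > 0"
  "f 2 $ 1 = 0" "f 3 $ 1 = 0" "f 3 $ 2 = 0" "f 4 $ 1 = 0" "f 4 $ 2 = 0" "f 4 $ 3 = 0"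
  "f 5 $ 1 = 0" "f 5 $ 2 = 0" "f 5 $ 3 = 0" "f 5 $ 4 = 0"
  "f 6 $ 1 = 0" "f 6 $ 2 = 0" "f 6 $ 3 = 0" "f 6 $ 4 = 0" "f 6 $ 5 = 0"
proof -
  show "f 1 $ 1 > 0" using fpos[of 1] by simp
  show "f 3 $ 3 > 0" using fpos[of 3] by simp
  show "f 4 $ 4 > 0" using fpos[of 4] by simp
  show "f 5 $ 5 > 0" using fpos[of 5] by simp
  have F2: "f 2 \<in> F 2" and F3: "f 3 \<in> F 3" and F4: "f 4 \<in> F 4" and F5: "f 5 \<in> F 5" and F6: "f 6 \<in> F 6"
    using fF by auto
  show "f 2 $ 1 = 0" using F2 unfolding F_def by (auto dest: spec[of _ 1])
  show "f 3 $ 1 = 0" "f 3 $ 2 = 0" using F3 unfolding F_def by (auto dest: spec[of _ 1] spec[of _ 2])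
  show "f 4 $ 1 = 0" "f 4 $ 2 = 0" "f 4 $ 3 = 0" using F4 unfolding F_def
    by (auto dest: spec[of _ 1] spec[of _ 2] spec[of _ 3])
  show "f 5 $ 1 = 0" "f 5 $ 2 = 0" "f 5 $ 3 = 0" "f 5 $ 4 = 0" using F5 unfolding F_def
    by (auto dest: spec[of _ 1] spec[of _ 2] spec[of _ 3] spec[of _ 4])
  show "f 6 $ 1 = 0" "f 6 $ 2 = 0" "f 6 $ 3 = 0" "f 6 $ 4 = 0" "f 6 $ 5 = 0" using F6 unfolding F_def
    by (auto dest: spec[of _ 1] spec[of _ 2] spec[of _ 3] spec[of _ 4] spec[of _ 5])
qed

lemma special_zero: "Cf 2 3 5 = 0" "Cf 2 4 5 = 0" "Cf 2 6 7 = 0"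
proof -
  have "nbr (f 2) (f 3) \<in> F 6" unfolding F_def
  proof (intro CollectI allI impI)
    fix m :: nat assume "1 \<le> m \<and> m < 6"
    then have "m = 1 \<or> m = 2 \<or> m = 3 \<or> m = 4 \<or> m = 5" by auto
    then show "nbr (f 2) (f 3) $ ix m = 0" using fc by (auto simp: nbr_c)
  qed
  then show "Cf 2 3 5 = 0" unfolding Cf_def using perp[of 5] by auto
  have "nbr (f 2) (f 4) \<in> F 6" unfolding F_def
  proof (intro CollectI allI impI)
    fix m :: nat assume "1 \<le> m \<and> m < 6"
    then have "m = 1 \<or> m = 2 \<or> m = 3 \<or> m = 4 \<or> m = 5" by auto
    then show "nbr (f 2) (f 4) $ ix m = 0" using fc by (auto simp: nbr_c)
  qed
  then show "Cf 2 4 5 = 0" unfolding Cf_def using perp[of 5] by auto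
  have "nbr (f 2) (f 6) = 0" using fc by (simp add: vec_eq_iff forall_7 nbr_c)
  then show "Cf 2 6 7 = 0" unfolding Cf_def by simp
qed

end


context onb begin

lemma main_contra:
  assumes der: "derivation nbr D" and ric: "\<forall>X. ricci_op nbr B X = c *\<^sub>R X + D X"
  shows False
proof -
  define t where "t = tt D"
  have lin: "linear D" using der unfolding derivation_def by auto
  have Dbr: "D (nbr x y) = nbr (D x) y + nbr x (D y)" for x y
    using der unfolding derivation_def by auto
  have R1: "ricci_form nbr B (f b) (f j) = c * B (f b) (f j) + B (D (f b)) (f j)" for b j
    using ricci_op_B[of "f b" "f j"] ric by (simp add: B_ladd B_lscale)
  have E1: "B (D (f i)) (f j) = 0" if i: "i \<in> {1..7}" and j: "j \<in> {1..7}" and ji: "j < i" for i j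
  proof -
    have "D (f i) \<in> F i" using D_F(1)[OF der i fF[OF i]] .
    then have "D (f i) \<in> F (j+1)" using F_mono ji by auto
    then show ?thesis using perp j by auto
  qed
  have E2: "B (D (f i)) (f j) = 0" if i: "i \<in> {1..7}" and j: "j \<in> {1..7}" and ij: "i < j" for i j
  proof -
    have "B (D (f i)) (f j) = ricci_form nbr B (f i) (f j)" using R1[of i j] orth[OF i j] ij by simp
    also have "\<dots> = ricci_form nbr B (f j) (f i)" using ric_sym i j by blast
    also have "\<dots> = B (D (f j)) (f i)" using R1[of j i] orth[OF j i] ij by simp
    also have "\<dots> = 0" using E1[OF j i ij] .
    finally show ?thesis .
  qed
  have E3: "B (D (f i)) (f i) = real (lam i) * t" if i: "i \<in> {1..7}" for i
  proof -
    define y where "y = D (f i) - (real (lam i) * t) *\<^sub>R f i"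
    have Di: "D (f i) \<in> F i" "D (f i) $ ix i = real (lam i) * tt D * f i $ ix i"
      using D_F[OF der i fF[OF i]] by auto
    have "y \<in> F (i+1)" unfolding F_def mem_Collect_eq
    proof (intro allI impI)
      fix m assume m: "1 \<le> m \<and> m < i + 1"
      show "y $ ix m = 0"
      proof (cases "m = i")
        case True then show ?thesis unfolding y_def using Di(2) t_def by simp
      next
        case False then have "m < i" using m by auto
        then show ?thesis unfolding y_def using Di(1) fF[OF i] m unfolding F_def by auto
      qed
    qed
    then have "B y (f i) = 0" using perp i by auto
    then show ?thesis unfolding y_def using orth[OF i i] by (simp add: B_lsub B_lscale)
  qed
  have Eall: "B (D (f i)) (f j) = (if i = j then real (lam i) * t else 0)"
    if i: "i \<in> {1..7}" and j: "j \<in> {1..7}" for i j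
    using E1[OF i j] E2[OF i j] E3[OF i] by (cases "i < j"; cases "j < i") auto
  have Deig: "D (f i) = (real (lam i) * t) *\<^sub>R f i" if i: "i \<in> {1..7}" for i
  proof -
    have "D (f i) = (\<Sum>m\<in>{1..7}. B (D (f i)) (f m) *\<^sub>R f m)" by (rule fexp)
    also have "\<dots> = (\<Sum>m\<in>{1..7}. (if i = m then real (lam i) * t else 0) *\<^sub>R f m)"
      by (rule sum.cong) (use Eall i in auto)
    also have "\<dots> = (real (lam i) * t) *\<^sub>R f i" using i by (simp add: if_distrib[where f="\<lambda>a. a *\<^sub>R _"] cong: if_cong)
    finally show ?thesis .
  qed
  have ricd: "ricci_form nbr B (f b) (f b) = c + real (lam b) * t" if b: "b \<in> {1..7}" for b
    using R1[of b b] orth[OF b b] E3[OF b] by simp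
  have grad: "(real (lam i) + real (lam j)) * t * Cf i j k = real (lam k) * t * Cf i j k"
    if i: "i \<in> {1..7}" and j: "j \<in> {1..7}" and k: "k \<in> {1..7}" for i j k
  proof -
    have "B (D (nbr (f i) (f j))) (f k) = (real (lam i) + real (lam j)) * t * Cf i j k"
      unfolding Dbr Deig[OF i] Deig[OF j] Cf_def by (simp add: nbr_lscale nbr_rscale B_ladd B_lscale algebra_simps)
    moreover have "B (D (nbr (f i) (f j))) (f k) = real (lam k) * t * Cf i j k"
    proof -
      have "D (nbr (f i) (f j)) = D (\<Sum>m\<in>{1..7}. Cf i j m *\<^sub>R f m)" by (rule arg_cong[where f=D, OF nbr_exp])
      also have "\<dots> = (\<Sum>m\<in>{1..7}. Cf i j m *\<^sub>R D (f m))"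
        by (simp add: linear_sum[OF lin] linear_scale[OF lin])
      finally have "B (D (nbr (f i) (f j))) (f k) = (\<Sum>m\<in>{1..7}. Cf i j m * B (D (f m)) (f k))"
        by (simp add: B_lsum B_lscale)
      also have "\<dots> = (\<Sum>m\<in>{1..7}. Cf i j m * (if m = k then real (lam m) * t else 0))"
        by (rule sum.cong) (use Eall k in auto)
      also have "\<dots> = real (lam k) * t * Cf i j k" using k by (simp add: if_distrib[where f="\<lambda>a. _ * a"] cong: if_cong)
      finally show ?thesis .
    qed
    ultimately show ?thesis by metis
  qed

  have lam_v: "lam 1 = 1" "lam 2 = 1" "lam 3 = 2" "lam 4 = 2" "lam 5 = 3" "lam 6 = 3" "lam 7 = 4"
    by (simp_all add: lam_def)
  have lam_le4: "lam k \<le> 4" for k by (simp add: lam_def)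
  have C1z: "Cf a k 1 = 0" if "a \<in> {1..7}" "k \<in> {1..7}" for a k
    using Cf_zero[of a k 1] lam_pos[of a] lam_pos[of k] that lam_v by simp
  have C7z: "Cf 7 a k = 0" if "a \<in> {1..7}" "k \<in> {1..7}" for a k
    using Cf_zero[of 7 a k] lam_pos[of a] lam_le4[of k] that lam_v by simp
  define S1 where "S1 = (\<Sum>a\<in>{1..7}. \<Sum>k\<in>{1..7}. Cf 1 a k * Cf 1 a k)"
  define S7 where "S7 = (\<Sum>a\<in>{1..7}. \<Sum>k\<in>{1..7}. Cf a k 7 * Cf a k 7)"
  have r11: "ricci_form nbr B (f 1) (f 1) = - S1 / 2"
  proof -
    have "(\<Sum>a\<in>{1..7}. \<Sum>k\<in>{1..7}. Cf a k 1 * Cf a k 1) = 0"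
    proof (rule sum.neutral, rule ballI)
      fix a assume a: "a \<in> {1..7::nat}"
      show "(\<Sum>k\<in>{1..7}. Cf a k 1 * Cf a k 1) = 0"
        by (rule sum.neutral, rule ballI) (use C1z a in simp)
    qed
    then show ?thesis using ric_C[of 1 1] unfolding S1_def by simp
  qed
  have r77: "ricci_form nbr B (f 7) (f 7) = S7 / 4"
  proof -
    have "(\<Sum>a\<in>{1..7}. \<Sum>k\<in>{1..7}. Cf 7 a k * Cf 7 a k) = 0"
    proof (rule sum.neutral, rule ballI)
      fix a assume a: "a \<in> {1..7::nat}"
      show "(\<Sum>k\<in>{1..7}. Cf 7 a k * Cf 7 a k) = 0"
        by (rule sum.neutral, rule ballI) (use C7z a in simp)
    qed
    then show ?thesis using ric_C[of 7 7] unfolding S7_def by simp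
  qed
  have S1p: "S1 \<ge> 0" unfolding S1_def by (intro sum_nonneg) auto
  have S7p: "S7 \<ge> 0" unfolding S7_def by (intro sum_nonneg) auto
  have tnz: "t \<noteq> 0"
  proof
    assume t0: "t = 0"
    have "c = - S1 / 2" using ricd[of 1] r11 t0 by simp
    moreover have "c = S7 / 4" using ricd[of 7] r77 t0 by simp
    ultimately have "S1 = 0" using S1p S7p by linarith
    then have z: "Cf 1 4 m = 0" if "m \<in> {1..7}" for m
      using sq_sum0[of "{1..7}" "\<lambda>a k. Cf 1 a k" 4 m] that unfolding S1_def by simp
    have "nbr (f 1) (f 4) = (\<Sum>m\<in>{1..7}. Cf 1 4 m *\<^sub>R f m)" by (rule nbr_exp)
    also have "\<dots> = 0" by (rule sum.neutral, rule ballI) (use z in simp)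
    finally have "nbr (f 1) (f 4) $ 5 = 0" by simp
    then show False using fc by (simp add: nbr_c5)
  qed
  have gz: "lam k = lam i + lam j" if "i \<in> {1..7}" "j \<in> {1..7}" "k \<in> {1..7}" "Cf i j k \<noteq> 0" for i j k
  proof -
    have "(real (lam i) + real (lam j) - real (lam k)) * (t * Cf i j k) = 0"
      using grad[OF that(1-3)] by (simp add: algebra_simps)
    then have "real (lam i) + real (lam j) = real (lam k)" using tnz that(4) by simp
    then show ?thesis by linarith
  qed
  have sw0: "(\<Sum>b\<in>{1..7}. wt b * ricci_form nbr B (f b) (f b)) = 0"
  proof -
    have "(\<Sum>b\<in>{1..7}. wt b * ricci_form nbr B (f b) (f b)) = (\<Sum>b\<in>{1..7}. wt b * (c + real (lam b) * t))"
      by (rule sum.cong) (simp_all add: ricd)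
    also have "\<dots> = 0" unfolding I7 by (simp add: wt_def lam_def)
    finally show ?thesis .
  qed
  have wid: "(\<Sum>b\<in>{1..7}. wt b * ricci_form nbr B (f b) (f b)) =
     (\<Sum>i\<in>{1..7}. \<Sum>j\<in>{1..7}. \<Sum>k\<in>{1..7}. (wt k - wt i - wt j) * (Cf i j k * Cf i j k)) / 4"
  proof (rule wsum)
    show "finite {1..7::nat}" by simp
    show "Cf j i k = - Cf i j k" for i j k by (rule Cf_anti)
    show "ricci_form nbr B (f b) (f b) = - (\<Sum>a\<in>{1..7}. \<Sum>k\<in>{1..7}. Cf b a k * Cf b a k) / 2
      + (\<Sum>a\<in>{1..7}. \<Sum>k\<in>{1..7}. Cf a k b * Cf a k b) / 4" if "b \<in> {1..7}" for b
      using ric_C[OF that that] .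
  qed
  define g where "g i j k = (wt k - wt i - wt j) * (Cf i j k * Cf i j k)" for i j k
  have g0: "(\<Sum>i\<in>{1..7}. \<Sum>j\<in>{1..7}. \<Sum>k\<in>{1..7}. g i j k) = 0" using sw0 wid unfolding g_def by simp
  have gnn: "g i j k \<ge> 0" if i: "i \<in> {1..7}" and j: "j \<in> {1..7}" and k: "k \<in> {1..7}" for i j k
  proof (cases "Cf i j k = 0")
    case True then show ?thesis unfolding g_def by simp
  next
    case False
    have ij: "i \<noteq> j" using False Cf_anti[of i i k] by auto
    have l: "lam k = lam i + lam j" using gz[OF i j k False] .
    have nb: "\<not> ((i = 2 \<and> (j = 3 \<or> j = 4) \<and> k = 5) \<or> ((i = 3 \<or> i = 4) \<and> j = 2 \<and> k = 5) \<or> (i = 2 \<and> j = 6 \<and> k = 7)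
     \<or> (i = 6 \<and> j = 2 \<and> k = 7))"
      using False special_zero Cf_anti[of 2 3 5] Cf_anti[of 2 4 5] Cf_anti[of 2 6 7] by auto
    have "wt k - wt i - wt j \<ge> 0" using wt_arith[OF i j k l ij nb] .
    then show ?thesis unfolding g_def by simp
  qed
  have gz0: "g i j k = 0" if "i \<in> {1..7}" "j \<in> {1..7}" "k \<in> {1..7}" for i j k
  proof -
    have fin: "finite {1..7::nat}" by simp
    have "(\<Sum>j\<in>{1..7}. \<Sum>k\<in>{1..7}. g i j k) = 0"
      using g0 that(1) fin gnn by (subst (asm) sum_nonneg_eq_0_iff) (auto intro!: sum_nonneg)
    then have "(\<Sum>k\<in>{1..7}. g i j k) = 0"
      using that(2) fin gnn that(1) by (subst (asm) sum_nonneg_eq_0_iff) (auto intro!: sum_nonneg)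
    then show ?thesis
      using that fin gnn by (subst (asm) sum_nonneg_eq_0_iff) auto
  qed
  have Z146: "Cf 1 4 6 = 0" using gz0[of 1 4 6] unfolding g_def by (simp add: wt_def)
  have Z136: "Cf 1 3 6 = 0" using gz0[of 1 3 6] unfolding g_def by (simp add: wt_def)
  have Z157: "Cf 1 5 7 = 0" using gz0[of 1 5 7] unfolding g_def by (simp add: wt_def)
  have lam3: "m \<in> {1..7} \<Longrightarrow> m \<noteq> 5 \<Longrightarrow> m \<noteq> 6 \<Longrightarrow> lam m \<noteq> 3" for m
    unfolding I7 by (auto simp: lam_def)
  have lam4: "m \<in> {1..7} \<Longrightarrow> m \<noteq> 7 \<Longrightarrow> lam m \<noteq> 4" for m
    unfolding I7 by (auto simp: lam_def)
  have n14: "nbr (f 1) (f 4) = Cf 1 4 5 *\<^sub>R f 5"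
  proof (rule nbr_single)
    fix m :: nat assume m: "m \<in> {1..7}" "m \<noteq> 5"
    show "Cf 1 4 m = 0"
    proof (cases "m = 6")
      case True then show ?thesis using Z146 by simp
    next
      case False then show ?thesis using gz[of 1 4 m] lam3[of m] m lam_v by auto
    qed
  qed auto
  have n13: "nbr (f 1) (f 3) = Cf 1 3 5 *\<^sub>R f 5"
  proof (rule nbr_single)
    fix m :: nat assume m: "m \<in> {1..7}" "m \<noteq> 5"
    show "Cf 1 3 m = 0"
    proof (cases "m = 6")
      case True then show ?thesis using Z136 by simp
    next
      case False then show ?thesis using gz[of 1 3 m] lam3[of m] m lam_v by auto
    qed
  qed auto
  have n15: "nbr (f 1) (f 5) = Cf 1 5 7 *\<^sub>R f 7"
  proof (rule nbr_single)
    fix m :: nat assume m: "m \<in> {1..7}" "m \<noteq> 7"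
    show "Cf 1 5 m = 0" using gz[of 1 5 m] lam4[of m] m lam_v by auto
  qed auto
  define X1 where "X1 = f 1 $ 1"
  define X2 where "X2 = f 1 $ 2"
  define a44 where "a44 = f 4 $ 4"
  define a33 where "a33 = f 3 $ 3"
  define a34 where "a34 = f 3 $ 4"
  define p5 where "p5 = f 5 $ 5"
  define p6 where "p6 = f 5 $ 6"
  define K where "K = Cf 1 4 5"
  define L where "L = Cf 1 3 5"
  have ea: "X1 * a44 = K * p5"
    using arg_cong[where f="\<lambda>v. v $ 5", OF n14] fc unfolding X1_def a44_def K_def p5_def by (simp add: nbr_c5)
  have eb: "X2 * a44 = K * p6"
    using arg_cong[where f="\<lambda>v. v $ 6", OF n14] fc unfolding X2_def a44_def K_def p6_def by (simp add: nbr_c6)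
  have ec: "X1 * a34 = L * p5"
    using arg_cong[where f="\<lambda>v. v $ 5", OF n13] fc unfolding X1_def a34_def L_def p5_def by (simp add: nbr_c5)
  have ed: "X2 * (a33 + a34) = L * p6"
    using arg_cong[where f="\<lambda>v. v $ 6", OF n13] fc unfolding X2_def a33_def a34_def L_def p6_def
    by (simp add: nbr_c6 algebra_simps)
  have ee: "X1 * p5 + X1 * p6 + X2 * p5 = 0"
    using arg_cong[where f="\<lambda>v. v $ 7", OF n15] fc Z157 unfolding X1_def X2_def p5_def p6_def
    by (simp add: nbr_c7)
  have pos: "X1 > 0" "a44 > 0" "a33 > 0" "p5 > 0" using fc unfolding X1_def a44_def a33_def p5_def by auto
  have h1: "a44 * (X1 * p6 - X2 * p5) = 0" using ea eb by algebra
  then have h1': "X1 * p6 = X2 * p5" using pos by simp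
  have h2: "p5 * (X2 * a33) = 0" using ec ed h1' by algebra
  then have "X2 = 0" using pos by simp
  then have "p6 = 0" using h1' pos by simp
  then have "X1 * p5 = 0" using ee \<open>X2 = 0\<close> by simp
  then show False using pos by simp
qed

end

theorem mainTheorem3:
  shows "\<not> einstein_nilradical nbr"
proof
  assume "einstein_nilradical nbr"
  then obtain B where ipb: "inner_prod B" and sol: "nilsoliton nbr B"
    unfolding einstein_nilradical_def by auto
  from sol obtain c D where der: "derivation nbr D" and ric: "\<forall>X. ricci_op nbr B X = c *\<^sub>R X + D X"
    unfolding nilsoliton_def by auto
  interpret ipB B by (rule ipB.intro[OF ipb])
  obtain f where orth: "\<forall>i\<in>{1..7}. \<forall>j\<in>{1..7}. B (f i) (f j) = (if i = j then 1 else 0)"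
    and inF: "\<forall>i\<in>{1..7}. f i \<in> F i \<and> f i $ ix i > 0"
    and ex: "\<forall>x\<in>F 1. x = (\<Sum>m\<in>{1..7}. B x (f m) *\<^sub>R f m)"
    using GS[of 1] by auto
  have F1: "x \<in> F 1" for x unfolding F_def by auto
  interpret onb B f
  proof unfold_locales
    show "B (f i) (f j) = (if i = j then 1 else 0)" if "i \<in> {1..7}" "j \<in> {1..7}" for i j
      using orth that by auto
    show "f i \<in> F i" if "i \<in> {1..7}" for i using inF that by auto
    show "f i $ ix i > 0" if "i \<in> {1..7}" for i using inF that by auto
    show "x = (\<Sum>m\<in>{1..7}. B x (f m) *\<^sub>R f m)" for x using ex F1 by blast
  qed
  show False by (rule main_contra[OF der ric])
qed

end
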